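(* Let $G$ be a group and $H$ a core-free subgroup of $G$. If $H$ has a right transversal $S$ in $G$ which generates $G$ and which is nilpotent with respect to its induced right loop structure, then $H$ is solvable.
   Context: For $H\le G$, a right transversal $S$ contains exactly one element of each right coset $Hg$, with $1\in S$; its induced operation is $x\circ y=$ the unique element of $S\cap Hxy$, making $(S,\circ)$ a right loop (two-sided identity, each equation $X\circ a=b$ uniquely solvable). $H$ is core-free if $\bigcap_{g\in G}g^{-1}Hg=\{1\}$. A congruence on a right loop $S$ is an equivalence relation which is a right subloop of $S\times S$; an invariant right subloop is the class $T$ of $1$ under a congruence, $S/T=\{T\circ x\}$ with $(T\circ x)\circ(T\circ y)=T\circ(x\circ y)$. For congruences $\beta,\gamma$, $\gamma$ centralizes $\beta$ if there is a congruence $(\gamma|\beta)$ on the right loop $\beta\subseteq S\times S$ with: (i) $(x,y)(\gamma|\beta)(u,v)\Rightarrow x\gamma u$; (ii) for $(x,y)\in\beta$, $(u,v)\mapsto u$ is a bijection from the $(\gamma|\beta)$-class of $(x,y)$ to the $\gamma$-class of $x$; (iii) $(x,y)\in\gamma\Rightarrow(x,x)(\gamma|\beta)(y,y)$; (iv) $(x,y)(\gamma|\beta)(u,v)\Rightarrow(y,x)(\gamma|\beta)(v,u)$; (v) $(x,y)(\gamma|\beta)(u,v)$, $(y,z)(\gamma|\beta)(v,w)\Rightarrow(x,z)(\gamma|\beta)(u,w)$. The center $\mathcal Z(S)$ is the class of $1$ under the unique maximal congruence centralized by $S\times S$. $S$ is nilpotent if the series $\mathcal Z_0=\{1\}$,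 $\mathcal Z_1=\mathcal Z(S)$, $\mathcal Z_{i+1}/\mathcal Z_i=\mathcal Z(S/\mathcal Z_i)$ reaches $\mathcal Z_n=S$ for some $n$. *)

theory Defs
  imports "HOL-Algebra.Solvable_Groups" "HOL-Algebra.Generated_Groups" "HOL-Algebra.Coset"
begin

definition right_transversal :: "('a, 'b) monoid_scheme \<Rightarrow> 'a set \<Rightarrow> 'a set \<Rightarrow> bool" where
  "right_transversal G H S \<longleftrightarrow> S \<subseteq> carrier G \<and> \<one>\<^bsub>G\<^esub> \<in> S \<and>
     (\<forall>g\<in>carrier G. \<exists>!s. s \<in> S \<and> s \<in> H #>\<^bsub>G\<^esub> g)"

definition transversal_op :: "('a, 'b) monoid_scheme \<Rightarrow> 'a set \<Rightarrow> 'a set \<Rightarrow> 'a \<Rightarrow> 'a \<Rightarrow> 'a" where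
  "transversal_op G H S x y = (THE s. s \<in> S \<and> s \<in> H #>\<^bsub>G\<^esub> (x \<otimes>\<^bsub>G\<^esub> y))"

definition core_free :: "('a, 'b) monoid_scheme \<Rightarrow> 'a set \<Rightarrow> bool" where
  "core_free G H \<longleftrightarrow>
     (\<Inter>g\<in>carrier G. {inv\<^bsub>G\<^esub> g \<otimes>\<^bsub>G\<^esub> h \<otimes>\<^bsub>G\<^esub> g | h. h \<in> H}) = {\<one>\<^bsub>G\<^esub>}"

definition right_loop :: "'a set \<Rightarrow> ('a \<Rightarrow> 'a \<Rightarrow> 'a) \<Rightarrow> 'a \<Rightarrow> bool" where
  "right_loop A m e \<longleftrightarrow> e \<in> A \<and> (\<forall>x\<in>A. \<forall>y\<in>A. m x y \<in> A) \<and>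
     (\<forall>x\<in>A. m e x = x \<and> m x e = x) \<and> (\<forall>a\<in>A. \<forall>b\<in>A. \<exists>!x. x \<in> A \<and> m x a = b)"

definition rdiv :: "'a set \<Rightarrow> ('a \<Rightarrow> 'a \<Rightarrow> 'a) \<Rightarrow> 'a \<Rightarrow> 'a \<Rightarrow> 'a" where
  "rdiv A m b a = (THE x. x \<in> A \<and> m x a = b)"

definition right_subloop :: "'a set \<Rightarrow> ('a \<Rightarrow> 'a \<Rightarrow> 'a) \<Rightarrow> 'a \<Rightarrow> 'a set \<Rightarrow> bool" where
  "right_subloop A m e B \<longleftrightarrow> B \<subseteq> A \<and> e \<in> B \<and> (\<forall>x\<in>B. \<forall>y\<in>B. m x y \<in> B) \<and>
     (\<forall>a\<in>B. \<forall>b\<in>B. rdiv A m b a \<in> B)"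

definition pair_op :: "('a \<Rightarrow> 'a \<Rightarrow> 'a) \<Rightarrow> 'a \<times> 'a \<Rightarrow> 'a \<times> 'a \<Rightarrow> 'a \<times> 'a" where
  "pair_op m p q = (m (fst p) (fst q), m (snd p) (snd q))"

definition loop_congruence :: "'a set \<Rightarrow> ('a \<Rightarrow> 'a \<Rightarrow> 'a) \<Rightarrow> 'a \<Rightarrow> ('a \<times> 'a) set \<Rightarrow> bool" where
  "loop_congruence A m e \<rho> \<longleftrightarrow> equiv A \<rho> \<and> right_subloop (A \<times> A) (pair_op m) (e, e) \<rho>"

text \<open>gamma centralizes beta (both congruences on the right loop (A,m,e))\<close>
definition centralizes :: "'a set \<Rightarrow> ('a \<Rightarrow> 'a \<Rightarrow> 'a) \<Rightarrow> 'a \<Rightarrow> ('a \<times> 'a) set \<Rightarrow> ('a \<times> 'a) set \<Rightarrow> bool" where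
  "centralizes A m e \<gamma> \<beta> \<longleftrightarrow> loop_congruence A m e \<gamma> \<and> loop_congruence A m e \<beta> \<and>
     (\<exists>\<delta>. loop_congruence \<beta> (pair_op m) (e, e) \<delta> \<and>
       (\<forall>x y u v. ((x, y), (u, v)) \<in> \<delta> \<longrightarrow> (x, u) \<in> \<gamma>) \<and>
       (\<forall>x y. (x, y) \<in> \<beta> \<longrightarrow> bij_betw fst {p. ((x, y), p) \<in> \<delta>} {u. (x, u) \<in> \<gamma>}) \<and>
       (\<forall>x y. (x, y) \<in> \<gamma> \<longrightarrow> ((x, x), (y, y)) \<in> \<delta>) \<and>
       (\<forall>x y u v. ((x, y), (u, v)) \<in> \<delta> \<longrightarrow> ((y, x), (v, u)) \<in> \<delta>) \<and>
       (\<forall>x y z u v w. ((x, y), (u, v)) \<in> \<delta> \<longrightarrow> ((y, z), (v, w)) \<in> \<delta> \<longrightarrow>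
           ((x, z), (u, w)) \<in> \<delta>))"

definition center_congruence :: "'a set \<Rightarrow> ('a \<Rightarrow> 'a \<Rightarrow> 'a) \<Rightarrow> 'a \<Rightarrow> ('a \<times> 'a) set" where
  "center_congruence A m e =
     (GREATEST \<gamma>. loop_congruence A m e \<gamma> \<and> centralizes A m e (A \<times> A) \<gamma>)"

definition loop_center :: "'a set \<Rightarrow> ('a \<Rightarrow> 'a \<Rightarrow> 'a) \<Rightarrow> 'a \<Rightarrow> 'a set" where
  "loop_center A m e = {x \<in> A. (e, x) \<in> center_congruence A m e}"

definition subloop_rel :: "'a set \<Rightarrow> ('a \<Rightarrow> 'a \<Rightarrow> 'a) \<Rightarrow> 'a set \<Rightarrow> ('a \<times> 'a) set" where
  "subloop_rel A m T = {(x, y). x \<in> A \<and> y \<in> A \<and> (\<exists>t\<in>T. x = m t y)}"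

text \<open>S/T: carrier A // rho (the cosets T o x), operation (T o x)(T o y) = T o (x o y)\<close>
definition quot_op :: "('a \<Rightarrow> 'a \<Rightarrow> 'a) \<Rightarrow> ('a \<times> 'a) set \<Rightarrow> 'a set \<Rightarrow> 'a set \<Rightarrow> 'a set" where
  "quot_op m \<rho> X Y = \<rho> `` {m (SOME x. x \<in> X) (SOME y. y \<in> Y)}"

text \<open>upper central series: Z_0 = {1}, Z_(i+1)/Z_i = Z(S/Z_i)\<close>
primrec upper_central :: "'a set \<Rightarrow> ('a \<Rightarrow> 'a \<Rightarrow> 'a) \<Rightarrow> 'a \<Rightarrow> nat \<Rightarrow> 'a set" where
  "upper_central A m e 0 = {e}"
| "upper_central A m e (Suc i) =
     (let \<rho> = subloop_rel A m (upper_central A m e i)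
      in \<Union> (loop_center (A // \<rho>) (quot_op m \<rho>) (\<rho> `` {e})))"

definition nilpotent_right_loop :: "'a set \<Rightarrow> ('a \<Rightarrow> 'a \<Rightarrow> 'a) \<Rightarrow> 'a \<Rightarrow> bool" where
  "nilpotent_right_loop A m e \<longleftrightarrow> (\<exists>n. upper_central A m e n = A)"

end

theory Submission
  imports Defs
begin



lemma rdiv_eqI:
  assumes "x \<in> B" "op x a = b" "\<And>y. y \<in> B \<Longrightarrow> op y a = b \<Longrightarrow> y = x"
  shows "rdiv B op b a = x"
  unfolding rdiv_def using assms by (intro the_equality) blast+

locale rloop =
  fixes A :: "'a set" and m :: "'a \<Rightarrow> 'a \<Rightarrow> 'a" and e :: 'a
  assumes RL: "right_loop A m e"
begin

lemma e_in[simp]: "e \<in> A" using RL unfolding right_loop_def by blast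
lemma m_in[simp]: "x \<in> A \<Longrightarrow> y \<in> A \<Longrightarrow> m x y \<in> A" using RL unfolding right_loop_def by blast
lemma e_left[simp]: "x \<in> A \<Longrightarrow> m e x = x" using RL unfolding right_loop_def by blast
lemma e_right[simp]: "x \<in> A \<Longrightarrow> m x e = x" using RL unfolding right_loop_def by blast
lemma ex1: "a \<in> A \<Longrightarrow> b \<in> A \<Longrightarrow> \<exists>!x. x \<in> A \<and> m x a = b" using RL unfolding right_loop_def by blast

lemma cancel: assumes "x \<in> A" "y \<in> A" "a \<in> A" "m x a = m y a" shows "x = y"
proof -
  have "\<exists>!z. z \<in> A \<and> m z a = m y a" using ex1 assms by simp
  then show ?thesis using assms by blast
qed

definition dv where "dv b a = rdiv A m b a"

lemma dv_prop: "a \<in> A \<Longrightarrow> b \<in> A \<Longrightarrow> dv b a \<in> A \<and> m (dv b a) a = b"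
  unfolding dv_def rdiv_def by (rule theI'[OF ex1])

lemma dv_in[simp]: "a \<in> A \<Longrightarrow> b \<in> A \<Longrightarrow> dv b a \<in> A" using dv_prop by blast
lemma dv_mul[simp]: "a \<in> A \<Longrightarrow> b \<in> A \<Longrightarrow> m (dv b a) a = b" using dv_prop by blast
lemma dv_eq: "x \<in> A \<Longrightarrow> a \<in> A \<Longrightarrow> m x a = b \<Longrightarrow> dv b a = x"
  unfolding dv_def
proof (rule rdiv_eqI)
  fix y assume "y \<in> A" "m y a = b" "x \<in> A" "a \<in> A" "m x a = b"
  then show "y = x" using cancel[of y x a] by simp
qed auto
lemma dv_mul2[simp]: "x \<in> A \<Longrightarrow> a \<in> A \<Longrightarrow> dv (m x a) a = x" by (rule dv_eq) auto
lemma dv_self[simp]: "a \<in> A \<Longrightarrow> dv a a = e" by (rule dv_eq) auto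

lemma rdiv_pair:
  assumes "a1 \<in> A" "a2 \<in> A" "b1 \<in> A" "b2 \<in> A"
  shows "rdiv (A \<times> A) (pair_op m) (b1, b2) (a1, a2) = (dv b1 a1, dv b2 a2)"
proof (rule rdiv_eqI)
  fix y assume "y \<in> A \<times> A" "pair_op m y (a1, a2) = (b1, b2)"
  then show "y = (dv b1 a1, dv b2 a2)" using assms by (cases y) (auto simp: pair_op_def dv_eq)
qed (use assms in \<open>auto simp: pair_op_def\<close>)

definition Z0 where "Z0 = {z \<in> A. \<forall>x\<in>A. \<forall>y\<in>A. m z x = m x z \<and> m (m x y) z = m x (m y z) \<and> m (m x z) y = m (m x y) z}"
definition gam0 where "gam0 = {(x, m x w) | x w. x \<in> A \<and> w \<in> Z0}"
definition del0 where "del0 = {((x, m x w), (u, m u w)) | x u w. x \<in> A \<and> u \<in> A \<and> w \<in> Z0}"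

lemma Z0D: assumes "z \<in> Z0" "x \<in> A" "y \<in> A"
  shows "z \<in> A" "m z x = m x z" "m (m x y) z = m x (m y z)" "m (m x z) y = m (m x y) z"
  using assms unfolding Z0_def by auto

lemma Z0I: assumes "z \<in> A" "\<And>x y. x \<in> A \<Longrightarrow> y \<in> A \<Longrightarrow> m z x = m x z \<and> m (m x y) z = m x (m y z) \<and> m (m x z) y = m (m x y) z"
  shows "z \<in> Z0" using assms unfolding Z0_def by auto

lemma e_Z0[simp]: "e \<in> Z0" by (rule Z0I) auto

lemma Z0_A: "z \<in> Z0 \<Longrightarrow> z \<in> A" unfolding Z0_def by auto

lemma Z0_mul: assumes "z \<in> Z0" "w \<in> Z0" shows "m z w \<in> Z0"
proof (rule Z0I)
  have zA: "z \<in> A" and wA: "w \<in> A" using assms Z0_A by auto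
  show "m z w \<in> A" using zA wA by simp
  fix x y assume x: "x \<in> A" and y: "y \<in> A"
  show "m (m z w) x = m x (m z w) \<and> m (m x y) (m z w) = m x (m y (m z w)) \<and> m (m x (m z w)) y = m (m x y) (m z w)"
  proof (intro conjI)
    have "m (m z w) x = m (m z x) w" using Z0D(4)[OF assms(2) zA x] by simp
    also have "\<dots> = m (m x z) w" using Z0D(2)[OF assms(1) x x] by simp
    also have "\<dots> = m x (m z w)" using Z0D(3)[OF assms(2) x zA] by simp
    finally show "m (m z w) x = m x (m z w)" .
    have "m (m x y) (m z w) = m (m (m x y) z) w" using Z0D(3)[OF assms(2) _ zA, of "m x y"] x y by simp
    also have "\<dots> = m (m x (m y z)) w" using Z0D(3)[OF assms(1) x y] by simp
    also have "\<dots> = m x (m (m y z) w)" using Z0D(3)[OF assms(2) x, of "m y z"] y zA by simp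
    also have "\<dots> = m x (m y (m z w))" using Z0D(3)[OF assms(2) y zA] by simp
    finally show "m (m x y) (m z w) = m x (m y (m z w))" .
    have "m (m x (m z w)) y = m (m (m x z) w) y" using Z0D(3)[OF assms(2) x zA] by simp
    also have "\<dots> = m (m (m x z) y) w" using Z0D(4)[OF assms(2) _ y, of "m x z"] x zA by simp
    also have "\<dots> = m (m (m x y) z) w" using Z0D(4)[OF assms(1) x y] by simp
    also have "\<dots> = m (m x y) (m z w)" using Z0D(3)[OF assms(2) _ zA, of "m x y"] x y by simp
    finally show "m (m x (m z w)) y = m (m x y) (m z w)" .
  qed
qed

lemma Z0_dv: assumes "v \<in> Z0" "w \<in> Z0" shows "dv v w \<in> Z0"
proof (rule Z0I)
  have vA: "v \<in> A" and wA: "w \<in> A" using assms Z0_A by auto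
  define c where "c = dv v w"
  have cA: "c \<in> A" and cw: "m c w = v" using vA wA by (auto simp: c_def)
  show "dv v w \<in> A" using vA wA by simp
  fix x y assume x: "x \<in> A" and y: "y \<in> A"
  have W3: "\<And>a b. a \<in> A \<Longrightarrow> b \<in> A \<Longrightarrow> m (m a b) w = m a (m b w)" using Z0D(3)[OF assms(2)] by blast
  have W4: "\<And>a b. a \<in> A \<Longrightarrow> b \<in> A \<Longrightarrow> m (m a w) b = m (m a b) w" using Z0D(4)[OF assms(2)] by blast
  have W2: "\<And>a. a \<in> A \<Longrightarrow> m w a = m a w" using Z0D(2)[OF assms(2)] by blast
  have V2: "\<And>a. a \<in> A \<Longrightarrow> m v a = m a v" using Z0D(2)[OF assms(1)] by blast
  have V3: "\<And>a b. a \<in> A \<Longrightarrow> b \<in> A \<Longrightarrow> m (m a b) v = m a (m b v)" using Z0D(3)[OF assms(1)] by blast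
  have V4: "\<And>a b. a \<in> A \<Longrightarrow> b \<in> A \<Longrightarrow> m (m a v) b = m (m a b) v" using Z0D(4)[OF assms(1)] by blast
  have 1: "m c x = m x c"
  proof (rule cancel[of _ _ w])
    have "m (m c x) w = m (m c w) x" using W4[OF cA x] by simp
    also have "\<dots> = m x v" using cw V2 x by simp
    also have "\<dots> = m (m x c) w" using W3[OF x cA] cw by simp
    finally show "m (m c x) w = m (m x c) w" .
  qed (use cA x wA in auto)
  have 2: "m (m x y) c = m x (m y c)"
  proof (rule cancel[of _ _ w])
    have "m (m (m x y) c) w = m (m x y) v" using W3[of "m x y" c] x y cA cw by simp
    also have "\<dots> = m x (m y v)" using V3 x y by simp
    also have "\<dots> = m (m x (m y c)) w" using W3[of x "m y c"] W3[of y c] x y cA cw by simp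
    finally show "m (m (m x y) c) w = m (m x (m y c)) w" .
  qed (use cA x y wA in auto)
  have 3: "m (m x c) y = m (m x y) c"
  proof (rule cancel[of _ _ w])
    have "m (m (m x c) y) w = m (m (m x c) w) y" using W4[of "m x c" y] x y cA by simp
    also have "\<dots> = m (m x v) y" using W3[of x c] x cA cw by simp
    also have "\<dots> = m (m x y) v" using V4 x y by simp
    also have "\<dots> = m (m (m x y) c) w" using W3[of "m x y" c] x y cA cw by simp
    finally show "m (m (m x c) y) w = m (m (m x y) c) w" .
  qed (use cA x y wA in auto)
  show "m (dv v w) x = m x (dv v w) \<and> m (m x y) (dv v w) = m x (m y (dv v w)) \<and> m (m x (dv v w)) y = m (m x y) (dv v w)"
    using 1 2 3 by (simp add: c_def)
qed

lemma ZC: "z \<in> Z0 \<Longrightarrow> x \<in> A \<Longrightarrow> m z x = m x z" using Z0D(2) by blast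
lemma ZA: "z \<in> Z0 \<Longrightarrow> x \<in> A \<Longrightarrow> y \<in> A \<Longrightarrow> m (m x y) z = m x (m y z)" using Z0D(3) by blast
lemma ZB: "z \<in> Z0 \<Longrightarrow> x \<in> A \<Longrightarrow> y \<in> A \<Longrightarrow> m (m x z) y = m (m x y) z" using Z0D(4) by blast

lemma pmul: assumes "x \<in> A" "x' \<in> A" "w \<in> Z0" "w' \<in> Z0"
  shows "m (m x w) (m x' w') = m (m x x') (m w w')"
proof -
  have wA: "w \<in> A" "w' \<in> A" using assms Z0_A by auto
  have "m (m x w) (m x' w') = m (m (m x w) x') w'" using ZA[OF assms(4), of "m x w" x'] assms wA by simp
  also have "\<dots> = m (m (m x x') w) w'" using ZB[OF assms(3) assms(1,2)] by simp
  also have "\<dots> = m (m x x') (m w w')" using ZA[OF assms(4), of "m x x'" w] assms wA by simp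
  finally show ?thesis .
qed

lemma pdiv: assumes "p \<in> A" "x \<in> A" "v \<in> Z0" "w \<in> Z0"
  shows "dv (m p v) (m x w) = m (dv p x) (dv v w)"
proof (rule dv_eq)
  have wA: "w \<in> A" "v \<in> A" using assms Z0_A by auto
  show "m (dv p x) (dv v w) \<in> A" "m x w \<in> A" using assms wA by auto
  show "m (m (dv p x) (dv v w)) (m x w) = m p v"
  proof -
    have c: "dv v w \<in> Z0" using Z0_dv assms by blast
    have "m (m (dv p x) (dv v w)) (m x w) = m (m (dv p x) x) (m (dv v w) w)"
      using pmul[OF dv_in[OF assms(2,1)] assms(2) c assms(4)] .
    also have "\<dots> = m p v" using assms wA by simp
    finally show ?thesis .
  qed
qed

definition winv where "winv w = dv e w"

lemma winv_Z0: "w \<in> Z0 \<Longrightarrow> winv w \<in> Z0" unfolding winv_def by (rule Z0_dv) auto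

lemma winv_r: "w \<in> Z0 \<Longrightarrow> m w (winv w) = e"
  using ZC[OF winv_Z0, of w w] Z0_A[of w] unfolding winv_def by simp

lemma mul_winv: "x \<in> A \<Longrightarrow> w \<in> Z0 \<Longrightarrow> m (m x w) (winv w) = x"
  using ZA[OF winv_Z0, of w x w] winv_r Z0_A by simp

lemma wuniq: "x \<in> A \<Longrightarrow> w \<in> Z0 \<Longrightarrow> w' \<in> Z0 \<Longrightarrow> m x w = m x w' \<Longrightarrow> w = w'"
  by (metis ZC Z0_A cancel)

lemma gam0_mem: "(x, y) \<in> gam0 \<longleftrightarrow> x \<in> A \<and> (\<exists>w\<in>Z0. y = m x w)"
  unfolding gam0_def by auto

lemma gam0_A: "gam0 \<subseteq> A \<times> A" unfolding gam0_def using Z0_A by auto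

lemma gam0_equiv: "equiv A gam0"
proof (rule equivI)
  show "gam0 \<subseteq> A \<times> A" by (rule gam0_A)
  show "refl_on A gam0" unfolding refl_on_def using gam0_A
    by (auto simp: gam0_mem intro!: bexI[of _ e])
  show "sym gam0"
  proof (rule symI)
    fix a b assume "(a, b) \<in> gam0"
    then obtain w where "a \<in> A" "w \<in> Z0" "b = m a w" by (auto simp: gam0_mem)
    then show "(b, a) \<in> gam0" unfolding gam0_mem using mul_winv winv_Z0 Z0_A by (auto intro!: bexI[of _ "winv w"])
  qed
  show "trans gam0"
  proof (rule transI)
    fix a b c assume "(a, b) \<in> gam0" "(b, c) \<in> gam0"
    then obtain w w' where "a \<in> A" "w \<in> Z0" "b = m a w" "w' \<in> Z0" "c = m b w'" by (auto simp: gam0_mem)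
    then show "(a, c) \<in> gam0" unfolding gam0_mem using ZA[of w' a w] Z0_A Z0_mul by auto
  qed
qed

lemma gam0_cong: "loop_congruence A m e gam0"
  unfolding loop_congruence_def right_subloop_def
proof (intro conjI gam0_equiv gam0_A ballI)
  show "(e, e) \<in> gam0" by (auto simp: gam0_mem intro!: bexI[of _ e])
  fix a b assume a: "a \<in> gam0" and b: "b \<in> gam0"
  obtain x w where a': "a = (x, m x w)" "x \<in> A" "w \<in> Z0" using a unfolding gam0_def by auto
  obtain p v where b': "b = (p, m p v)" "p \<in> A" "v \<in> Z0" using b unfolding gam0_def by auto
  have wA: "w \<in> A" "v \<in> A" using a' b' Z0_A by auto
  show "pair_op m a b \<in> gam0" using a' b' pmul[of x p w v] Z0_mul
    by (auto simp: pair_op_def gam0_mem)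
  have r: "rdiv (A \<times> A) (pair_op m) b a = (dv p x, m (dv p x) (dv v w))"
    using a' b' wA rdiv_pair[of x "m x w" p "m p v"] pdiv[of p x v w] by simp
  show "rdiv (A \<times> A) (pair_op m) b a \<in> gam0"
    unfolding r gam0_mem using a' b' Z0_dv by auto
qed

lemma AA_cong: "loop_congruence A m e (A \<times> A)"
  unfolding loop_congruence_def right_subloop_def
  by (auto simp: pair_op_def equiv_def refl_on_def sym_def trans_def rdiv_pair)

lemma del0_mem: "((x, y), (u, v)) \<in> del0 \<longleftrightarrow> x \<in> A \<and> u \<in> A \<and> (\<exists>w\<in>Z0. y = m x w \<and> v = m u w)"
  unfolding del0_def by auto

lemma del0_gam: "del0 \<subseteq> gam0 \<times> gam0" unfolding del0_def gam0_def by auto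

lemma pp_cancel: assumes "Y \<in> (A \<times> A) \<times> (A \<times> A)" "X \<in> (A \<times> A) \<times> (A \<times> A)" "a \<in> (A \<times> A) \<times> (A \<times> A)"
  "pair_op (pair_op m) Y a = pair_op (pair_op m) X a" shows "Y = X"
proof -
  obtain y1 y2 y3 y4 x1 x2 x3 x4 a1 a2 a3 a4 where "Y = ((y1,y2),(y3,y4))" "X = ((x1,x2),(x3,x4))" "a = ((a1,a2),(a3,a4))"
    by (metis prod.collapse)
  then show ?thesis using assms cancel[of y1 x1 a1] cancel[of y2 x2 a2] cancel[of y3 x3 a3] cancel[of y4 x4 a4]
    by (auto simp: pair_op_def)
qed

lemma del0_cong: "loop_congruence gam0 (pair_op m) (e, e) del0"
  unfolding loop_congruence_def right_subloop_def
proof (intro conjI del0_gam ballI)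
  show "equiv gam0 del0"
  proof (rule equivI)
    show "del0 \<subseteq> gam0 \<times> gam0" by (rule del0_gam)
    show "refl_on gam0 del0" unfolding refl_on_def
    proof (intro ballI)
      fix P assume "P \<in> gam0"
      then obtain x w where "P = (x, m x w)" "x \<in> A" "w \<in> Z0" unfolding gam0_def by blast
      then show "(P, P) \<in> del0" by (auto simp: del0_mem)
    qed
    show "sym del0"
    proof (rule symI)
      fix P Q assume "(P, Q) \<in> del0"
      then obtain x u w where "P = (x, m x w)" "Q = (u, m u w)" "x \<in> A" "u \<in> A" "w \<in> Z0" unfolding del0_def by blast
      then show "(Q, P) \<in> del0" unfolding del0_def by blast
    qed
    show "trans del0"
    proof (rule transI)
      fix P Q R assume "(P, Q) \<in> del0" "(Q, R) \<in> del0"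
      then obtain x u w u' p w' where "P = (x, m x w)" "Q = (u, m u w)" "x \<in> A" "u \<in> A" "w \<in> Z0"
         "Q = (u', m u' w')" "R = (p, m p w')" "u' \<in> A" "p \<in> A" "w' \<in> Z0" unfolding del0_def by blast
      moreover then have "w = w'" using wuniq by auto
      ultimately show "(P, R) \<in> del0" unfolding del0_def by blast
    qed
  qed
  show "((e, e), e, e) \<in> del0" by (auto simp: del0_mem intro!: bexI[of _ e])
  fix a b assume a: "a \<in> del0" and b: "b \<in> del0"
  obtain x u w where a': "a = ((x, m x w), (u, m u w))" "x \<in> A" "u \<in> A" "w \<in> Z0" using a unfolding del0_def by auto
  obtain p q v where b': "b = ((p, m p v), (q, m q v))" "p \<in> A" "q \<in> A" "v \<in> Z0" using b unfolding del0_def by auto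
  have wA: "w \<in> A" "v \<in> A" using a' b' Z0_A by auto
  have "pair_op (pair_op m) a b = ((m x p, m (m x p) (m w v)), (m u q, m (m u q) (m w v)))"
    using a' b' pmul[of x p w v] pmul[of u q w v] by (simp add: pair_op_def)
  moreover have "((m x p, m (m x p) (m w v)), (m u q, m (m u q) (m w v))) \<in> del0"
    unfolding del0_mem using a' b' Z0_mul by auto
  ultimately show "pair_op (pair_op m) a b \<in> del0" by simp
  define c where "c = dv v w"
  have c: "c \<in> Z0" "c \<in> A" using Z0_dv b' a' Z0_A unfolding c_def by auto
  define X where "X = ((dv p x, m (dv p x) c), (dv q u, m (dv q u) c))"
  have XA: "X \<in> (A \<times> A) \<times> (A \<times> A)" using a' b' c unfolding X_def by auto
  have Xd: "X \<in> gam0 \<times> gam0" using a' b' c unfolding X_def by (auto simp: gam0_mem)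
  have Xa: "pair_op (pair_op m) X a = b"
    using a' b' c pmul[of "dv p x" x c w] pmul[of "dv q u" u c w] wA
    unfolding X_def c_def by (auto simp: pair_op_def)
  have aA: "a \<in> (A \<times> A) \<times> (A \<times> A)" using a' wA by auto
  have "rdiv (gam0 \<times> gam0) (pair_op (pair_op m)) b a = X"
    apply (rule rdiv_eqI[where op="pair_op (pair_op m)", OF Xd Xa])
    apply (rule pp_cancel[OF _ XA aA])
    using gam0_A Xa by auto
  then show "rdiv (gam0 \<times> gam0) (pair_op (pair_op m)) b a \<in> del0"
    using a' b' c unfolding X_def by (auto simp: del0_mem)
qed

lemma centr_gam0: "centralizes A m e (A \<times> A) gam0"
  unfolding centralizes_def
proof (intro conjI AA_cong gam0_cong exI[of _ del0] del0_cong allI impI)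
  fix x y u v assume "((x, y), u, v) \<in> del0" then show "(x, u) \<in> A \<times> A" by (auto simp: del0_mem)
next
  fix x y assume xy: "(x, y) \<in> gam0"
  then obtain w where w: "x \<in> A" "w \<in> Z0" "y = m x w" by (auto simp: gam0_mem)
  have cls: "{p. ((x, y), p) \<in> del0} = (\<lambda>u. (u, m u w)) ` A"
  proof (safe)
    fix a b assume "((x, y), a, b) \<in> del0"
    then obtain w' where "a \<in> A" "w' \<in> Z0" "y = m x w'" "b = m a w'" by (auto simp: del0_mem)
    with w wuniq have "w' = w" by metis
    then show "(a, b) \<in> (\<lambda>u. (u, m u w)) ` A" using \<open>a \<in> A\<close> \<open>b = m a w'\<close> by auto
  next
    fix u assume "u \<in> A" then show "((x, y), u, m u w) \<in> del0" using w by (auto simp: del0_mem)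
  qed
  show "bij_betw fst {p. ((x, y), p) \<in> del0} {u. (x, u) \<in> A \<times> A}"
    unfolding cls using w by (auto simp: bij_betw_def inj_on_def image_image)
next
  fix x y assume "(x, y) \<in> A \<times> A" then show "((x, x), y, y) \<in> del0"
    by (auto simp: del0_mem intro!: bexI[of _ e])
next
  fix x y u v assume "((x, y), u, v) \<in> del0"
  then obtain w where w: "x \<in> A" "u \<in> A" "w \<in> Z0" "y = m x w" "v = m u w" by (auto simp: del0_mem)
  then show "((y, x), v, u) \<in> del0" unfolding del0_mem
    using mul_winv winv_Z0 Z0_A by (auto intro!: bexI[of _ "winv w"])
next
  fix x y z u v w assume a: "((x, y), u, v) \<in> del0" and b: "((y, z), v, w) \<in> del0"
  from a obtain w1 where w1: "x \<in> A" "u \<in> A" "w1 \<in> Z0" "y = m x w1" "v = m u w1" by (auto simp: del0_mem)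
  from b obtain w2 where w2: "w2 \<in> Z0" "z = m y w2" "w = m v w2" by (auto simp: del0_mem)
  show "((x, z), u, w) \<in> del0" unfolding del0_mem
    using w1 w2 ZA Z0_A Z0_mul by (auto intro!: bexI[of _ "m w1 w2"])
qed

lemma centr_sub: assumes "loop_congruence A m e \<gamma>" "centralizes A m e (A \<times> A) \<gamma>"
  shows "\<gamma> \<subseteq> gam0"
proof -
  obtain \<delta> where C: "loop_congruence \<gamma> (pair_op m) (e, e) \<delta>"
    "\<forall>x y. (x, y) \<in> \<gamma> \<longrightarrow> bij_betw fst {p. ((x, y), p) \<in> \<delta>} {u. (x, u) \<in> A \<times> A}"
    "\<forall>x y. (x, y) \<in> A \<times> A \<longrightarrow> ((x, x), (y, y)) \<in> \<delta>"
    "\<forall>x y u v. ((x, y), (u, v)) \<in> \<delta> \<longrightarrow> ((y, x), (v, u)) \<in> \<delta>"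
    using assms(2) unfolding centralizes_def by blast
  have eqg: "equiv A \<gamma>" using assms(1) unfolding loop_congruence_def by auto
  have gA: "\<gamma> \<subseteq> A \<times> A" using eqg unfolding equiv_def refl_on_def by auto
  have eqd: "equiv \<gamma> \<delta>" using C(1) unfolding loop_congruence_def by auto
  have dmul: "\<And>P Q. P \<in> \<delta> \<Longrightarrow> Q \<in> \<delta> \<Longrightarrow> pair_op (pair_op m) P Q \<in> \<delta>"
    using C(1) unfolding loop_congruence_def right_subloop_def by auto
  have dmul': "((m a a', m b b'), (m c c', m d d')) \<in> \<delta>"
    if "((a, b), (c, d)) \<in> \<delta>" "((a', b'), (c', d')) \<in> \<delta>" for a b c d a' b' c' d'
    using dmul[OF that] by (simp add: pair_op_def)
  have dsym: "\<And>P Q. (P, Q) \<in> \<delta> \<Longrightarrow> (Q, P) \<in> \<delta>" using eqd unfolding equiv_def sym_def by blast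
  have dtrans: "\<And>P Q R. (P, Q) \<in> \<delta> \<Longrightarrow> (Q, R) \<in> \<delta> \<Longrightarrow> (P, R) \<in> \<delta>" using eqd unfolding equiv_def trans_def by blast
  have drefl: "\<And>P. P \<in> \<gamma> \<Longrightarrow> (P, P) \<in> \<delta>" using eqd unfolding equiv_def refl_on_def by blast
  have dsub: "\<And>P Q. (P, Q) \<in> \<delta> \<Longrightarrow> P \<in> \<gamma> \<and> Q \<in> \<gamma>" using eqd unfolding equiv_def refl_on_def by blast
  have inj: "v = v'" if "((a, b), (u, v)) \<in> \<delta>" "((a, b), (u, v')) \<in> \<delta>" for a b u v v'
  proof -
    have "(a, b) \<in> \<gamma>" using dsub that by blast
    then have "inj_on fst {p. ((a, b), p) \<in> \<delta>}" using C(2) unfolding bij_betw_def by blast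
    then show ?thesis using that unfolding inj_on_def by force
  qed
  have diag: "\<And>x y. x \<in> A \<Longrightarrow> y \<in> A \<Longrightarrow> ((x, x), (y, y)) \<in> \<delta>" using C(3) by blast
  have zcls1: "((e, z), (u, m u z)) \<in> \<delta>" and zcls2: "((e, z), (u, m z u)) \<in> \<delta>"
    if "(e, z) \<in> \<gamma>" "u \<in> A" for z u
  proof -
    have zA: "z \<in> A" using that gA by auto
    show "((e, z), (u, m u z)) \<in> \<delta>" using dmul'[OF diag[of e u] drefl[OF that(1)]] that zA by simp
    show "((e, z), (u, m z u)) \<in> \<delta>" using dmul'[OF drefl[OF that(1)] diag[of e u]] that zA by simp
  qed
  have zZ: "z \<in> Z0" if z: "(e, z) \<in> \<gamma>" for z
  proof (rule Z0I)
    show zA: "z \<in> A" using that gA by auto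
    fix x y assume x: "x \<in> A" and y: "y \<in> A"
    have 1: "m z x = m x z" using inj[OF zcls2[OF z x] zcls1[OF z x]] .
    have a: "((x, m x z), (m x y, m x (m y z))) \<in> \<delta>"
      using dmul'[OF diag[of x x] zcls1[OF z y]] x by simp
    have b: "((e, z), (m x y, m x (m y z))) \<in> \<delta>" using dtrans[OF zcls1[OF z x] a] .
    have 2: "m (m x y) z = m x (m y z)" using inj[OF zcls1[OF z, of "m x y"] b] x y by simp
    have c: "((m x y, m (m x z) y), (e, z)) \<in> \<delta>"
      using dmul'[OF dsym[OF zcls1[OF z x]] diag[of y e]] x y zA by simp
    have 3: "m (m x z) y = m (m x y) z" using inj[OF dsym[OF c] zcls1[OF z, of "m x y"]] x y by simp
    show "m z x = m x z \<and> m (m x y) z = m x (m y z) \<and> m (m x z) y = m (m x y) z" using 1 2 3 by blast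
  qed
  show ?thesis
  proof
    fix P assume P: "P \<in> \<gamma>"
    obtain x y where Pxy: "P = (x, y)" by (cases P)
    have xy: "x \<in> A" "y \<in> A" using P Pxy gA by auto
    have "fst ` {p. ((x, y), p) \<in> \<delta>} = {u. (x, u) \<in> A \<times> A}" using C(2) P Pxy unfolding bij_betw_def by blast
    then have "e \<in> fst ` {p. ((x, y), p) \<in> \<delta>}" using xy by auto
    then obtain w where d1: "((x, y), (e, w)) \<in> \<delta>" by force
    have ew: "(e, w) \<in> \<gamma>" using dsub[OF d1] by blast
    have wZ: "w \<in> Z0" using zZ[OF ew] .
    have "((x, y), (x, m x w)) \<in> \<delta>" using dtrans[OF d1 zcls1[OF ew xy(1)]] .
    moreover have "((x, y), (x, y)) \<in> \<delta>" using drefl P Pxy by blast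
    ultimately have "y = m x w" using inj by blast
    then show "P \<in> gam0" using Pxy xy wZ by (auto simp: gam0_mem)
  qed
qed

lemma center_eq: "center_congruence A m e = gam0"
  unfolding center_congruence_def
  by (rule Greatest_equality) (use gam0_cong centr_gam0 centr_sub in auto)

lemma loop_center_eq: "loop_center A m e = Z0"
  unfolding loop_center_def center_eq using Z0_A by (auto simp: gam0_mem)


end



context rloop begin

definition cong where "cong \<theta> \<longleftrightarrow> loop_congruence A m e \<theta>"

lemma cong_equiv: "cong \<theta> \<Longrightarrow> equiv A \<theta>" unfolding cong_def loop_congruence_def by blast

lemma cong_A: "cong \<theta> \<Longrightarrow> (x, y) \<in> \<theta> \<Longrightarrow> x \<in> A \<and> y \<in> A"
  using cong_equiv unfolding equiv_def by blast

lemma cong_refl: "cong \<theta> \<Longrightarrow> x \<in> A \<Longrightarrow> (x, x) \<in> \<theta>"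
  using cong_equiv unfolding equiv_def refl_on_def by blast

lemma cong_sym: "cong \<theta> \<Longrightarrow> (x, y) \<in> \<theta> \<Longrightarrow> (y, x) \<in> \<theta>"
  using cong_equiv unfolding equiv_def sym_def by blast

lemma cong_trans: "cong \<theta> \<Longrightarrow> (x, y) \<in> \<theta> \<Longrightarrow> (y, z) \<in> \<theta> \<Longrightarrow> (x, z) \<in> \<theta>"
  using cong_equiv unfolding equiv_def trans_def by blast

lemma cong_mul: "cong \<theta> \<Longrightarrow> (x, y) \<in> \<theta> \<Longrightarrow> (x', y') \<in> \<theta> \<Longrightarrow> (m x x', m y y') \<in> \<theta>"
proof -
  assume a: "cong \<theta>" "(x, y) \<in> \<theta>" "(x', y') \<in> \<theta>"
  then have "pair_op m (x, y) (x', y') \<in> \<theta>"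
    unfolding cong_def loop_congruence_def right_subloop_def by blast
  then show ?thesis by (simp add: pair_op_def)
qed

lemma cong_dv: assumes "cong \<theta>" "(x, y) \<in> \<theta>" "(a, b) \<in> \<theta>" shows "(dv x a, dv y b) \<in> \<theta>"
proof -
  have "rdiv (A \<times> A) (pair_op m) (x, y) (a, b) \<in> \<theta>"
    using assms unfolding cong_def loop_congruence_def right_subloop_def by blast
  moreover have "x \<in> A" "y \<in> A" "a \<in> A" "b \<in> A" using cong_A assms by blast+
  ultimately show ?thesis using rdiv_pair by simp
qed

lemma subloop_rel_eq: assumes "cong \<theta>" shows "subloop_rel A m (\<theta> `` {e}) = \<theta>"
proof safe
  fix x y assume "(x, y) \<in> subloop_rel A m (\<theta> `` {e})"
  then obtain t where t: "x \<in> A" "y \<in> A" "(e, t) \<in> \<theta>" "x = m t y" unfolding subloop_rel_def by auto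
  have "(m e y, m t y) \<in> \<theta>" using cong_mul[OF assms t(3) cong_refl[OF assms t(2)]] .
  then show "(x, y) \<in> \<theta>" using t cong_sym[OF assms] by simp
next
  fix x y assume xy: "(x, y) \<in> \<theta>"
  have A: "x \<in> A" "y \<in> A" using cong_A[OF assms xy] by auto
  have "(dv x y, dv y y) \<in> \<theta>" using cong_dv[OF assms xy cong_refl[OF assms A(2)]] .
  then have "(e, dv x y) \<in> \<theta>" using A cong_sym[OF assms] by simp
  then show "(x, y) \<in> subloop_rel A m (\<theta> `` {e})" unfolding subloop_rel_def using A by force
qed

lemma cls_eq: "cong \<theta> \<Longrightarrow> (x, y) \<in> \<theta> \<Longrightarrow> \<theta> `` {x} = \<theta> `` {y}"
  using cong_equiv equiv_class_eq by metis

lemma cls_eq_iff: "cong \<theta> \<Longrightarrow> x \<in> A \<Longrightarrow> y \<in> A \<Longrightarrow> \<theta> `` {x} = \<theta> `` {y} \<longleftrightarrow> (x, y) \<in> \<theta>"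
  using cong_equiv eq_equiv_class_iff by metis

lemma qop: assumes "cong \<theta>" "x \<in> A" "y \<in> A"
  shows "quot_op m \<theta> (\<theta> `` {x}) (\<theta> `` {y}) = \<theta> `` {m x y}"
proof -
  have ex: "\<exists>x'. x' \<in> \<theta> `` {x}" "\<exists>y'. y' \<in> \<theta> `` {y}" using cong_refl[OF assms(1)] assms by auto
  have "(x, SOME x'. x' \<in> \<theta> `` {x}) \<in> \<theta>" using someI_ex[OF ex(1)] by simp
  moreover have "(y, SOME y'. y' \<in> \<theta> `` {y}) \<in> \<theta>" using someI_ex[OF ex(2)] by simp
  ultimately have "(m x y, m (SOME x'. x' \<in> \<theta> `` {x}) (SOME y'. y' \<in> \<theta> `` {y})) \<in> \<theta>"
    using cong_mul[OF assms(1)] by blast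
  then have "\<theta> `` {m x y} = \<theta> `` {m (SOME x'. x' \<in> \<theta> `` {x}) (SOME y'. y' \<in> \<theta> `` {y})}"
    by (rule cls_eq[OF assms(1)])
  then show ?thesis unfolding quot_op_def by simp
qed

lemma quot_rl: assumes "cong \<theta>" shows "right_loop (A // \<theta>) (quot_op m \<theta>) (\<theta> `` {e})"
proof -
  have 1: "\<theta> `` {e} \<in> A // \<theta>" by (rule quotientI) simp
  have 2: "quot_op m \<theta> X Y \<in> A // \<theta>" if X: "X \<in> A // \<theta>" and Y: "Y \<in> A // \<theta>" for X Y
  proof -
    obtain x where x: "X = \<theta> `` {x}" "x \<in> A" using X by (rule quotientE)
    obtain y where y: "Y = \<theta> `` {y}" "y \<in> A" using Y by (rule quotientE)
    show ?thesis using x y qop[OF assms] by (auto intro: quotientI)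
  qed
  have 3: "quot_op m \<theta> (\<theta> `` {e}) X = X \<and> quot_op m \<theta> X (\<theta> `` {e}) = X" if X: "X \<in> A // \<theta>" for X
  proof -
    obtain x where x: "X = \<theta> `` {x}" "x \<in> A" using X by (rule quotientE)
    show ?thesis using x qop[OF assms] by simp
  qed
  have 4: "\<exists>!Z. Z \<in> A // \<theta> \<and> quot_op m \<theta> Z X = Y" if X: "X \<in> A // \<theta>" and Y: "Y \<in> A // \<theta>" for X Y
  proof -
    obtain x where x: "X = \<theta> `` {x}" "x \<in> A" using X by (rule quotientE)
    obtain y where y: "Y = \<theta> `` {y}" "y \<in> A" using Y by (rule quotientE)
    show ?thesis
    proof (rule ex1I[of _ "\<theta> `` {dv y x}"])
      show "\<theta> `` {dv y x} \<in> A // \<theta> \<and> quot_op m \<theta> (\<theta> `` {dv y x}) X = Y"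
        using x y qop[OF assms] by (auto intro: quotientI)
      fix Z assume Z: "Z \<in> A // \<theta> \<and> quot_op m \<theta> Z X = Y"
      obtain z where z: "Z = \<theta> `` {z}" "z \<in> A" using Z by (auto elim: quotientE)
      have "\<theta> `` {m z x} = \<theta> `` {y}" using Z z x y qop[OF assms] by simp
      then have "(m z x, y) \<in> \<theta>" using cls_eq_iff[OF assms] z x y by simp
      then have "(dv (m z x) x, dv y x) \<in> \<theta>" using cong_dv[OF assms _ cong_refl[OF assms x(2)]] by blast
      then show "Z = \<theta> `` {dv y x}" using z x cls_eq[OF assms] by simp
    qed
  qed
  show ?thesis unfolding right_loop_def
    apply (intro conjI ballI)
    subgoal by (rule 1)
    subgoal by (rule 2)
    subgoal by (rule 3[THEN conjunct1])
    subgoal by (rule 3[THEN conjunct2])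
    subgoal by (rule 4)
    done
qed

lemma quot_rloop: "cong \<theta> \<Longrightarrow> rloop (A // \<theta>) (quot_op m \<theta>) (\<theta> `` {e})"
  using quot_rl unfolding rloop_def .

lemma qdv: assumes "cong \<theta>" "a \<in> A" "b \<in> A"
  shows "rloop.dv (A // \<theta>) (quot_op m \<theta>) (\<theta> `` {b}) (\<theta> `` {a}) = \<theta> `` {dv b a}"
proof -
  interpret Q: rloop "A // \<theta>" "quot_op m \<theta>" "\<theta> `` {e}" using quot_rloop[OF assms(1)] .
  show ?thesis by (rule Q.dv_eq) (use assms qop in \<open>auto intro: quotientI\<close>)
qed

definition pb where "pb \<theta> C = {(x, y). x \<in> A \<and> y \<in> A \<and> (\<theta> `` {x}, \<theta> `` {y}) \<in> C}"

lemma pb_cong: assumes "cong \<theta>" "loop_congruence (A // \<theta>) (quot_op m \<theta>) (\<theta> `` {e}) C"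
  shows "cong (pb \<theta> C)"
proof -
  interpret Q: rloop "A // \<theta>" "quot_op m \<theta>" "\<theta> `` {e}" using quot_rloop[OF assms(1)] .
  have eqC: "equiv (A // \<theta>) C" using assms(2) unfolding loop_congruence_def by blast
  have subC: "right_subloop (A // \<theta> \<times> A // \<theta>) (pair_op (quot_op m \<theta>)) (\<theta> `` {e}, \<theta> `` {e}) C"
    using assms(2) unfolding loop_congruence_def by blast
  have Q: "\<And>x. x \<in> A \<Longrightarrow> \<theta> `` {x} \<in> A // \<theta>" by (rule quotientI)
  show ?thesis unfolding cong_def loop_congruence_def
  proof (intro conjI)
    show "equiv A (pb \<theta> C)"
    proof (rule equivI)
      show "pb \<theta> C \<subseteq> A \<times> A" unfolding pb_def by auto
      show "refl_on A (pb \<theta> C)" unfolding refl_on_def pb_def using eqC Q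
        unfolding equiv_def refl_on_def by blast
      show "sym (pb \<theta> C)" unfolding sym_def pb_def using eqC unfolding equiv_def sym_def by blast
      show "trans (pb \<theta> C)" unfolding trans_def pb_def using eqC unfolding equiv_def trans_def by blast
    qed
    show "right_subloop (A \<times> A) (pair_op m) (e, e) (pb \<theta> C)" unfolding right_subloop_def
    proof (intro conjI ballI)
      show "pb \<theta> C \<subseteq> A \<times> A" unfolding pb_def by auto
      show "(e, e) \<in> pb \<theta> C" unfolding pb_def using subC unfolding right_subloop_def by auto
      fix P R assume P: "P \<in> pb \<theta> C" and R: "R \<in> pb \<theta> C"
      obtain x y where Pxy: "P = (x, y)" "x \<in> A" "y \<in> A" "(\<theta> `` {x}, \<theta> `` {y}) \<in> C" using P unfolding pb_def by auto
      obtain x' y' where Rxy: "R = (x', y')" "x' \<in> A" "y' \<in> A" "(\<theta> `` {x'}, \<theta> `` {y'}) \<in> C" using R unfolding pb_def by auto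
      have "pair_op (quot_op m \<theta>) (\<theta> `` {x}, \<theta> `` {y}) (\<theta> `` {x'}, \<theta> `` {y'}) \<in> C"
        using subC Pxy Rxy unfolding right_subloop_def by blast
      then show "pair_op m P R \<in> pb \<theta> C" using Pxy Rxy qop[OF assms(1)]
        unfolding pb_def by (simp add: pair_op_def)
      have "rdiv (A // \<theta> \<times> A // \<theta>) (pair_op (quot_op m \<theta>)) (\<theta> `` {x'}, \<theta> `` {y'}) (\<theta> `` {x}, \<theta> `` {y}) \<in> C"
        using subC Pxy Rxy unfolding right_subloop_def by blast
      moreover have "rdiv (A // \<theta> \<times> A // \<theta>) (pair_op (quot_op m \<theta>)) (\<theta> `` {x'}, \<theta> `` {y'}) (\<theta> `` {x}, \<theta> `` {y})
          = (\<theta> `` {dv x' x}, \<theta> `` {dv y' y})"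
        using Q.rdiv_pair[OF Q Q Q Q] Pxy Rxy qdv[OF assms(1)] by simp
      ultimately show "rdiv (A \<times> A) (pair_op m) R P \<in> pb \<theta> C"
        using Pxy Rxy rdiv_pair unfolding pb_def by simp
    qed
  qed
qed

end



context rloop begin

lemma Z_left_assoc: assumes "z \<in> Z0" "x \<in> A" "y \<in> A" shows "m (m z x) y = m z (m x y)"
proof -
  have zA: "z \<in> A" using Z0_A assms by blast
  have "m (m z x) y = m (m x z) y" using ZC[OF assms(1,2)] by simp
  also have "\<dots> = m (m x y) z" using ZB[OF assms] .
  also have "\<dots> = m z (m x y)" using ZC[OF assms(1)] assms by simp
  finally show ?thesis .
qed

lemma Z_dv_left: assumes "z \<in> Z0" "x \<in> A" "a \<in> A" shows "dv (m z x) a = m z (dv x a)"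
proof (rule dv_eq)
  have zA: "z \<in> A" using Z0_A assms by blast
  show "m z (dv x a) \<in> A" "a \<in> A" using zA assms by auto
  show "m (m z (dv x a)) a = m z x" using Z_left_assoc[OF assms(1) _ assms(3), of "dv x a"] assms by simp
qed

lemma Z_swap: assumes "z \<in> Z0" "w \<in> Z0" "x \<in> A" shows "m z (m w x) = m w (m z x)"
proof -
  have A: "z \<in> A" "w \<in> A" using Z0_A assms by auto
  have "m z (m w x) = m (m z w) x" using Z_left_assoc[OF assms(1) A(2) assms(3)] by simp
  also have "\<dots> = m (m w z) x" using ZC[OF assms(1) A(2)] by simp
  also have "\<dots> = m w (m z x)" using Z_left_assoc[OF assms(2) A(1) assms(3)] by simp
  finally show ?thesis .
qed

fun th :: "nat \<Rightarrow> ('a \<times> 'a) set" where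
  "th 0 = Id_on A"
| "th (Suc i) = pb (th i) (center_congruence (A // th i) (quot_op m (th i)) (th i `` {e}))"

lemma Id_cong: "cong (Id_on A)"
  unfolding cong_def loop_congruence_def right_subloop_def
proof (intro conjI ballI)
  show "equiv A (Id_on A)" by (rule equivI) (auto simp: refl_on_def sym_def trans_def)
  show "Id_on A \<subseteq> A \<times> A" by auto
  show "(e, e) \<in> Id_on A" using e_in by (rule Id_onI)
  fix P R assume "P \<in> Id_on A" "R \<in> Id_on A"
  then obtain x y where "P = (x, x)" "R = (y, y)" "x \<in> A" "y \<in> A" by auto
  then show "pair_op m P R \<in> Id_on A" "rdiv (A \<times> A) (pair_op m) R P \<in> Id_on A"
    by (auto simp: pair_op_def rdiv_pair)
qed

lemma union_cls: assumes "cong \<theta>"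
  shows "\<Union> {X \<in> A // \<theta>. P X} = {y \<in> A. P (\<theta> `` {y})}"
proof safe
  fix y X assume "y \<in> X" "X \<in> A // \<theta>" "P X"
  moreover obtain x where "X = \<theta> `` {x}" "x \<in> A" using \<open>X \<in> A // \<theta>\<close> by (rule quotientE)
  ultimately show "y \<in> A" "P (\<theta> `` {y})" using cls_eq[OF assms] cong_A[OF assms] by auto
next
  fix y assume "y \<in> A" "P (\<theta> `` {y})"
  then show "y \<in> \<Union> {X \<in> A // \<theta>. P X}" using cong_refl[OF assms] by (auto intro!: quotientI)
qed

lemma th_props: "cong (th i) \<and> upper_central A m e i = th i `` {e}"
proof (induction i)
  case 0
  then show ?case using Id_cong by auto
next
  case (Suc i)
  define \<theta> where "\<theta> = th i"
  have c: "cong \<theta>" and u: "upper_central A m e i = \<theta> `` {e}" using Suc unfolding \<theta>_def by auto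
  interpret Q: rloop "A // \<theta>" "quot_op m \<theta>" "\<theta> `` {e}" using quot_rloop[OF c] .
  have CC: "center_congruence (A // \<theta>) (quot_op m \<theta>) (\<theta> `` {e}) = Q.gam0" by (rule Q.center_eq)
  have ts: "th (Suc i) = pb \<theta> Q.gam0" using CC unfolding \<theta>_def by simp
  have c': "cong (th (Suc i))" unfolding ts by (rule pb_cong[OF c Q.gam0_cong])
  have "upper_central A m e (Suc i) = \<Union> (loop_center (A // \<theta>) (quot_op m \<theta>) (\<theta> `` {e}))"
    using u subloop_rel_eq[OF c] by (simp add: Let_def)
  also have "\<dots> = \<Union> {X \<in> A // \<theta>. (\<theta> `` {e}, X) \<in> Q.gam0}" unfolding loop_center_def CC by simp
  also have "\<dots> = {y \<in> A. (\<theta> `` {e}, \<theta> `` {y}) \<in> Q.gam0}" by (rule union_cls[OF c])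
  also have "\<dots> = th (Suc i) `` {e}" unfolding ts pb_def by auto
  finally show ?case using c' by blast
qed

lemma nilp_th: assumes "nilpotent_right_loop A m e" shows "\<exists>n. th n = A \<times> A"
proof -
  obtain n where n: "upper_central A m e n = A" using assms unfolding nilpotent_right_loop_def by blast
  have c: "cong (th n)" and u: "th n `` {e} = A" using th_props[of n] n by auto
  have "th n = A \<times> A"
  proof
    show "th n \<subseteq> A \<times> A" using cong_A[OF c] by auto
    show "A \<times> A \<subseteq> th n"
    proof clarify
      fix x y assume "x \<in> A" "y \<in> A"
      then have "(e, x) \<in> th n" "(e, y) \<in> th n" using u by auto
      then show "(x, y) \<in> th n" using cong_sym[OF c] cong_trans[OF c] by blast
    qed
  qed
  then show ?thesis by blast
qed

end



locale transv = group +
  fixes H S :: "'a set"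
  assumes sub: "subgroup H G" and tr: "right_transversal G H S" and gen: "generate G S = carrier G"
begin

definition rep where "rep x = (THE t. t \<in> S \<and> t \<in> H #> x)"

abbreviation mS where "mS \<equiv> transversal_op G H S"

lemma mS_rep: "mS x y = rep (x \<otimes> y)" unfolding transversal_op_def rep_def by simp

lemma S_carrier: "S \<subseteq> carrier G" using tr unfolding right_transversal_def by blast
lemma one_S: "\<one> \<in> S" using tr unfolding right_transversal_def by blast
lemma H_carrier: "H \<subseteq> carrier G" using sub subgroup.subset by blast

lemma rep_prop: assumes "x \<in> carrier G" shows "rep x \<in> S \<and> rep x \<in> H #> x"
proof -
  have "\<exists>!t. t \<in> S \<and> t \<in> H #> x" using tr assms unfolding right_transversal_def by blast
  then show ?thesis unfolding rep_def by (rule theI')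
qed

lemma rep_unique: assumes "x \<in> carrier G" "t \<in> S" "t \<in> H #> x" shows "rep x = t"
proof -
  have "\<exists>!t. t \<in> S \<and> t \<in> H #> x" using tr assms unfolding right_transversal_def by blast
  then show ?thesis using rep_prop[OF assms(1)] assms by blast
qed

lemma rep_in: "x \<in> carrier G \<Longrightarrow> rep x \<in> S" using rep_prop by blast
lemma rep_carrier: "x \<in> carrier G \<Longrightarrow> rep x \<in> carrier G" using rep_in S_carrier by blast

lemma rep_coset: assumes "x \<in> carrier G" shows "H #> rep x = H #> x"
  using repr_independence[of "rep x" H x] rep_prop[OF assms] assms sub by simp

lemma rep_cong: assumes "x \<in> carrier G" "y \<in> carrier G" "H #> x = H #> y" shows "rep x = rep y"
proof -
  have "rep y \<in> H #> x" using rep_prop[OF assms(2)] assms(3) by simp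
  then show ?thesis using rep_unique[OF assms(1) rep_in[OF assms(2)]] by simp
qed

lemma rep_S: "s \<in> S \<Longrightarrow> rep s = s"
  using rep_unique[of s s] rcos_self[of s H] sub S_carrier by auto

lemma rep_mult: assumes "x \<in> carrier G" "g \<in> carrier G" shows "rep (rep x \<otimes> g) = rep (x \<otimes> g)"
proof (rule rep_cong)
  show "rep x \<otimes> g \<in> carrier G" "x \<otimes> g \<in> carrier G" using assms rep_carrier by auto
  have "H #> (rep x \<otimes> g) = (H #> rep x) #> g" using coset_mult_assoc[OF H_carrier rep_carrier[OF assms(1)] assms(2)] by simp
  also have "\<dots> = (H #> x) #> g" using rep_coset[OF assms(1)] by simp
  also have "\<dots> = H #> (x \<otimes> g)" using coset_mult_assoc[OF H_carrier assms] by simp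
  finally show "H #> (rep x \<otimes> g) = H #> (x \<otimes> g)" .
qed

lemma mS_in: "x \<in> carrier G \<Longrightarrow> g \<in> carrier G \<Longrightarrow> mS x g \<in> S"
  unfolding mS_rep by (rule rep_in) simp

lemma mS_comp: assumes "x \<in> carrier G" "g \<in> carrier G" "h \<in> carrier G"
  shows "mS (mS x g) h = mS x (g \<otimes> h)"
  unfolding mS_rep using rep_mult[of "x \<otimes> g" h] assms by (simp add: m_assoc)

lemma mS_one: "s \<in> S \<Longrightarrow> mS s \<one> = s"
  unfolding mS_rep using S_carrier rep_S by auto

lemma RL': "right_loop S mS \<one>"
proof -
  have 2: "mS x y \<in> S" if "x \<in> S" "y \<in> S" for x y using that S_carrier mS_in by auto
  have 3: "mS \<one> x = x \<and> mS x \<one> = x" if x: "x \<in> S" for x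
  proof -
    have xc: "x \<in> carrier G" using x S_carrier by auto
    show ?thesis using x xc rep_S by (simp add: mS_rep)
  qed
  have 4: "\<exists>!z. z \<in> S \<and> mS z x = y" if x: "x \<in> S" and y: "y \<in> S" for x y
  proof (rule ex1I[of _ "rep (y \<otimes> inv x)"])
    have xc: "x \<in> carrier G" and yc: "y \<in> carrier G" using x y S_carrier by auto
    show "rep (y \<otimes> inv x) \<in> S \<and> mS (rep (y \<otimes> inv x)) x = y"
      using rep_in rep_mult[of "y \<otimes> inv x" x] xc yc rep_S[OF y] by (simp add: mS_rep m_assoc)
    fix z assume z: "z \<in> S \<and> mS z x = y"
    have zc: "z \<in> carrier G" using z S_carrier by auto
    have "rep (y \<otimes> inv x) = rep (rep (z \<otimes> x) \<otimes> inv x)" using z by (simp add: mS_rep)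
    also have "\<dots> = rep (z \<otimes> x \<otimes> inv x)" using rep_mult zc xc by simp
    also have "\<dots> = z" using zc xc rep_S z by (simp add: m_assoc)
    finally show "z = rep (y \<otimes> inv x)" by simp
  qed
  show ?thesis unfolding right_loop_def
    apply (intro conjI ballI)
    subgoal by (rule one_S)
    subgoal by (rule 2)
    subgoal by (rule 3[THEN conjunct1])
    subgoal by (rule 3[THEN conjunct2])
    subgoal by (rule 4)
    done
qed

sublocale L: rloop S mS \<one> unfolding rloop_def by (rule RL')

lemma mS_inv: assumes "s \<in> S" "a \<in> S" shows "mS s (inv a) = L.dv s a"
proof -
  have c: "s \<in> carrier G" "a \<in> carrier G" using assms S_carrier by auto
  have "mS (mS s (inv a)) a = s" using mS_comp[of s "inv a" a] c mS_one[OF assms(1)] by simp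
  then show ?thesis using L.dv_eq[of "mS s (inv a)" a s] mS_in c assms by simp
qed

lemma core: assumes "core_free G H" "g \<in> carrier G" "\<And>s. s \<in> S \<Longrightarrow> mS s g = s" shows "g = \<one>"
proof -
  have "g \<in> (\<Inter>x\<in>carrier G. {inv x \<otimes> h \<otimes> x | h. h \<in> H})"
  proof
    fix x assume xc: "x \<in> carrier G"
    define s where "s = rep x"
    have sS: "s \<in> S" and sc: "s \<in> carrier G" using rep_in rep_carrier xc unfolding s_def by auto
    have hs: "H #> s = H #> x" using rep_coset xc unfolding s_def by simp
    have "rep (s \<otimes> g) = s" using assms(3)[OF sS] by (simp add: mS_rep)
    then have "H #> (s \<otimes> g) = H #> s" using rep_coset[of "s \<otimes> g"] sc assms(2) by simp
    then have "H #> (x \<otimes> g) = H #> x"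
      using coset_mult_assoc[OF H_carrier sc assms(2)] coset_mult_assoc[OF H_carrier xc assms(2)] hs by simp
    then have "x \<otimes> g \<in> H #> x" using repr_independenceD[OF sub, of "x \<otimes> g" x] xc assms(2) by simp
    then have h: "x \<otimes> g \<otimes> inv x \<in> H" using subgroup.rcos_module_imp[OF sub] xc is_group by blast
    have "inv x \<otimes> (x \<otimes> g \<otimes> inv x) \<otimes> x = inv x \<otimes> (x \<otimes> g)" using xc assms(2) by (simp add: m_assoc)
    also have "\<dots> = g" using xc assms(2) by (metis inv_closed l_inv l_one m_assoc)
    finally have "inv x \<otimes> (x \<otimes> g \<otimes> inv x) \<otimes> x = g" .
    then show "g \<in> {inv x \<otimes> h \<otimes> x | h. h \<in> H}" using h by force
  qed
  then show ?thesis using assms(1) unfolding core_free_def by simp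
qed

end



context transv begin

definition K where "K \<theta> = {g \<in> carrier G. \<forall>s\<in>S. (mS s g, s) \<in> \<theta>}"

lemma gen_carrier: "g \<in> generate G S \<Longrightarrow> g \<in> carrier G" using gen by simp

lemma comm:
  assumes c: "L.cong \<theta>" and z: "z \<in> rloop.Z0 (S // \<theta>) (quot_op mS \<theta>)" and g: "g \<in> generate G S"
  shows "\<And>s s'. s \<in> S \<Longrightarrow> s' \<in> S \<Longrightarrow> \<theta> `` {s'} = quot_op mS \<theta> z (\<theta> `` {s})
     \<Longrightarrow> \<theta> `` {mS s' g} = quot_op mS \<theta> z (\<theta> `` {mS s g})"
  using g
proof (induction g)
  interpret Q: rloop "S // \<theta>" "quot_op mS \<theta>" "\<theta> `` {\<one>}" using L.quot_rloop[OF c] .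
  have Qc: "\<And>x. x \<in> S \<Longrightarrow> \<theta> `` {x} \<in> S // \<theta>" by (rule quotientI)
  {
    case one
    then show ?case using mS_one by simp
  next
    case (incl a)
    have "\<theta> `` {mS s' a} = quot_op mS \<theta> (\<theta> `` {s'}) (\<theta> `` {a})" using L.qop[OF c, of s' a] incl(1,3) by simp
    also have "\<dots> = quot_op mS \<theta> z (quot_op mS \<theta> (\<theta> `` {s}) (\<theta> `` {a}))"
      using incl(1,2,4) Q.Z_left_assoc[OF z Qc Qc] by simp
    also have "\<dots> = quot_op mS \<theta> z (\<theta> `` {mS s a})" using L.qop[OF c, of s a] incl(1,2) by simp
    finally show ?case .
  next
    case (inv a)
    have "\<theta> `` {mS s' (inv a)} = \<theta> `` {L.dv s' a}" using mS_inv inv by simp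
    also have "\<dots> = Q.dv (\<theta> `` {s'}) (\<theta> `` {a})" using L.qdv[OF c, of a s'] inv(1,3) by simp
    also have "\<dots> = quot_op mS \<theta> z (Q.dv (\<theta> `` {s}) (\<theta> `` {a}))"
      using inv(1,2,4) Q.Z_dv_left[OF z Qc Qc] by simp
    also have "\<dots> = quot_op mS \<theta> z (\<theta> `` {mS s (inv a)})" using L.qdv[OF c, of a s] inv(1,2) mS_inv by simp
    finally show ?case .
  next
    case (eng g h)
    have gc: "g \<in> carrier G" "h \<in> carrier G" using eng gen_carrier by auto
    have sc: "s \<in> carrier G" "s' \<in> carrier G" using eng S_carrier by auto
    have 1: "\<theta> `` {mS s' g} = quot_op mS \<theta> z (\<theta> `` {mS s g})" using eng by blast
    have "\<theta> `` {mS (mS s' g) h} = quot_op mS \<theta> z (\<theta> `` {mS (mS s g) h})"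
      using eng.IH(2)[OF _ _ 1] mS_in gc sc by blast
    then show ?case using mS_comp gc sc by simp
  }
qed

lemma compat: assumes c: "L.cong \<theta>" and g: "g \<in> carrier G" and st: "(s, t) \<in> \<theta>"
  shows "(mS s g, mS t g) \<in> \<theta>"
proof -
  interpret Q: rloop "S // \<theta>" "quot_op mS \<theta>" "\<theta> `` {\<one>}" using L.quot_rloop[OF c] .
  have S: "s \<in> S" "t \<in> S" using L.cong_A[OF c st] by auto
  have "\<theta> `` {t} = quot_op mS \<theta> (\<theta> `` {\<one>}) (\<theta> `` {s})"
    using L.cls_eq[OF c st] S quotientI[of s S \<theta>] by simp
  then have "\<theta> `` {mS t g} = quot_op mS \<theta> (\<theta> `` {\<one>}) (\<theta> `` {mS s g})"
    using comm[OF c Q.e_Z0 _ S(1) S(2)] g gen by simp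
  then have "\<theta> `` {mS t g} = \<theta> `` {mS s g}" using quotientI[of "mS s g" S \<theta>] mS_in g S S_carrier by auto
  then have "\<theta> `` {mS s g} = \<theta> `` {mS t g}" by simp
  then show ?thesis using L.cls_eq_iff[OF c, of "mS s g" "mS t g"] mS_in g S S_carrier by auto
qed

lemma K_subgroup: assumes c: "L.cong \<theta>" shows "subgroup (K \<theta>) G"
proof (rule subgroupI)
  show "K \<theta> \<subseteq> carrier G" unfolding K_def by auto
  have "\<one> \<in> K \<theta>" unfolding K_def using mS_one L.cong_refl[OF c] by auto
  then show "K \<theta> \<noteq> {}" by blast
next
  fix g assume g: "g \<in> K \<theta>"
  have gc: "g \<in> carrier G" using g unfolding K_def by auto
  show "inv g \<in> K \<theta>" unfolding K_def
  proof (intro CollectI conjI ballI)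
    show "inv g \<in> carrier G" using gc by simp
    fix s assume s: "s \<in> S"
    have sc: "s \<in> carrier G" using s S_carrier by auto
    define t where "t = mS s (inv g)"
    have tS: "t \<in> S" using mS_in sc gc unfolding t_def by simp
    have "mS t g = s" using mS_comp[of s "inv g" g] sc gc mS_one[OF s] unfolding t_def by simp
    moreover have "(mS t g, t) \<in> \<theta>" using g tS unfolding K_def by auto
    ultimately show "(mS s (inv g), s) \<in> \<theta>" using L.cong_sym[OF c] unfolding t_def by simp
  qed
next
  fix g h assume g: "g \<in> K \<theta>" and h: "h \<in> K \<theta>"
  have gc: "g \<in> carrier G" "h \<in> carrier G" using g h unfolding K_def by auto
  show "g \<otimes> h \<in> K \<theta>" unfolding K_def
  proof (intro CollectI conjI ballI)
    show "g \<otimes> h \<in> carrier G" using gc by simp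
    fix s assume s: "s \<in> S"
    have sc: "s \<in> carrier G" using s S_carrier by auto
    have "(mS (mS s g) h, mS s g) \<in> \<theta>" using h mS_in sc gc unfolding K_def by auto
    moreover have "(mS s g, s) \<in> \<theta>" using g s unfolding K_def by auto
    ultimately show "(mS s (g \<otimes> h), s) \<in> \<theta>" using L.cong_trans[OF c] mS_comp sc gc by metis
  qed
qed

lemma K_comm:
  assumes c: "L.cong \<theta>" and g1: "g1 \<in> K (L.pb \<theta> (center_congruence (S // \<theta>) (quot_op mS \<theta>) (\<theta> `` {\<one>})))"
    and g2: "g2 \<in> K (L.pb \<theta> (center_congruence (S // \<theta>) (quot_op mS \<theta>) (\<theta> `` {\<one>})))"
    and s: "s \<in> S"
  shows "(mS s (g1 \<otimes> g2), mS s (g2 \<otimes> g1)) \<in> \<theta>"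
proof -
  interpret Q: rloop "S // \<theta>" "quot_op mS \<theta>" "\<theta> `` {\<one>}" using L.quot_rloop[OF c] .
  have CC: "center_congruence (S // \<theta>) (quot_op mS \<theta>) (\<theta> `` {\<one>}) = Q.gam0" by (rule Q.center_eq)
  have sc: "s \<in> carrier G" using s S_carrier by auto
  have Xq: "\<theta> `` {s} \<in> S // \<theta>" using s by (rule quotientI)
  have cfac: "\<exists>c \<in> Q.Z0. \<theta> `` {mS s g} = quot_op mS \<theta> c (\<theta> `` {s})"
    if g: "g \<in> K (L.pb \<theta> (center_congruence (S // \<theta>) (quot_op mS \<theta>) (\<theta> `` {\<one>})))" for g
  proof -
    have "(mS s g, s) \<in> L.pb \<theta> Q.gam0" using g s unfolding K_def CC by auto
    then have "(\<theta> `` {mS s g}, \<theta> `` {s}) \<in> Q.gam0" unfolding L.pb_def by auto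
    then have "(\<theta> `` {s}, \<theta> `` {mS s g}) \<in> Q.gam0" using Q.gam0_equiv unfolding equiv_def sym_def by blast
    then obtain c where "c \<in> Q.Z0" "\<theta> `` {mS s g} = quot_op mS \<theta> (\<theta> `` {s}) c" unfolding Q.gam0_mem by blast
    then show ?thesis using Q.ZC[OF _ Xq] by metis
  qed
  obtain c1 where c1: "c1 \<in> Q.Z0" "\<theta> `` {mS s g1} = quot_op mS \<theta> c1 (\<theta> `` {s})" using cfac[OF g1] by blast
  obtain c2 where c2: "c2 \<in> Q.Z0" "\<theta> `` {mS s g2} = quot_op mS \<theta> c2 (\<theta> `` {s})" using cfac[OF g2] by blast
  have gc: "g1 \<in> carrier G" "g2 \<in> carrier G" using g1 g2 unfolding K_def by auto
  have e1: "\<theta> `` {mS s (g1 \<otimes> g2)} = quot_op mS \<theta> c1 (quot_op mS \<theta> c2 (\<theta> `` {s}))"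
  proof -
    have "\<theta> `` {mS (mS s g1) g2} = quot_op mS \<theta> c1 (\<theta> `` {mS s g2})"
      using comm[OF c c1(1), of g2 s "mS s g1"] gc gen s sc mS_in c1(2) by simp
    then show ?thesis using mS_comp sc gc c2 by simp
  qed
  have e2: "\<theta> `` {mS s (g2 \<otimes> g1)} = quot_op mS \<theta> c2 (quot_op mS \<theta> c1 (\<theta> `` {s}))"
  proof -
    have "\<theta> `` {mS (mS s g2) g1} = quot_op mS \<theta> c2 (\<theta> `` {mS s g1})"
      using comm[OF c c2(1), of g1 s "mS s g2"] gc gen s sc mS_in c2(2) by simp
    then show ?thesis using mS_comp sc gc c1 by simp
  qed
  have "\<theta> `` {mS s (g1 \<otimes> g2)} = \<theta> `` {mS s (g2 \<otimes> g1)}"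
    using e1 e2 Q.Z_swap[OF c1(1) c2(1) Xq] by simp
  then show ?thesis using L.cls_eq_iff[OF c] mS_in sc gc by auto
qed

lemma derived_step: assumes c: "L.cong \<theta>"
  shows "derived G (K (L.pb \<theta> (center_congruence (S // \<theta>) (quot_op mS \<theta>) (\<theta> `` {\<one>})))) \<subseteq> K \<theta>"
  unfolding derived_def
proof (rule generate_subgroup_incl[OF _ K_subgroup[OF c]])
  let ?K = "K (L.pb \<theta> (center_congruence (S // \<theta>) (quot_op mS \<theta>) (\<theta> `` {\<one>})))"
  show "derived_set G ?K \<subseteq> K \<theta>"
  proof clarify
    fix g1 g2 assume g1: "g1 \<in> ?K" and g2: "g2 \<in> ?K"
    have gc: "g1 \<in> carrier G" "g2 \<in> carrier G" using g1 g2 unfolding K_def by auto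
    show "g1 \<otimes> g2 \<otimes> inv g1 \<otimes> inv g2 \<in> K \<theta>" unfolding K_def
    proof (intro CollectI conjI ballI)
      show "g1 \<otimes> g2 \<otimes> inv g1 \<otimes> inv g2 \<in> carrier G" using gc by simp
      fix s assume s: "s \<in> S"
      have sc: "s \<in> carrier G" using s S_carrier by auto
      define k where "k = inv g1 \<otimes> inv g2"
      have kc: "k \<in> carrier G" using gc unfolding k_def by simp
      have "(mS (mS s (g1 \<otimes> g2)) k, mS (mS s (g2 \<otimes> g1)) k) \<in> \<theta>"
        using compat[OF c kc K_comm[OF c g1 g2 s]] .
      moreover have "mS (mS s (g1 \<otimes> g2)) k = mS s (g1 \<otimes> g2 \<otimes> inv g1 \<otimes> inv g2)"
        using mS_comp[of s "g1 \<otimes> g2" k] sc gc kc unfolding k_def by (simp add: m_assoc)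
      moreover have "mS (mS s (g2 \<otimes> g1)) k = s"
      proof -
        have "(g2 \<otimes> g1) \<otimes> k = \<one>" using gc unfolding k_def
          by (metis inv_mult_group m_closed r_inv)
        then show ?thesis using mS_comp[of s "g2 \<otimes> g1" k] sc gc kc mS_one[OF s] by simp
      qed
      ultimately show "(mS s (g1 \<otimes> g2 \<otimes> inv g1 \<otimes> inv g2), s) \<in> \<theta>" by simp
    qed
  qed
qed

lemma K_th_step: "derived G (K (L.th (Suc i))) \<subseteq> K (L.th i)"
  using derived_step[OF conjunct1[OF L.th_props[of i]]] by simp

lemma K_full: "K (S \<times> S) = carrier G" unfolding K_def using mS_in S_carrier by auto

lemma K_zero: assumes "core_free G H" shows "K (L.th 0) \<subseteq> {\<one>}"
proof
  fix g assume "g \<in> K (L.th 0)"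
  then have "g \<in> carrier G" "\<And>s. s \<in> S \<Longrightarrow> mS s g = s" unfolding K_def by auto
  then show "g \<in> {\<one>}" using core[OF assms] by auto
qed

lemma derived_chain: assumes "L.th n = S \<times> S"
  shows "k \<le> n \<Longrightarrow> (derived G ^^ k) (carrier G) \<subseteq> K (L.th (n - k))"
proof (induction k)
  case 0 then show ?case using assms K_full by simp
next
  case (Suc k)
  have "n - k = Suc (n - Suc k)" using Suc by simp
  then have "derived G (K (L.th (n - k))) \<subseteq> K (L.th (n - Suc k))" using K_th_step by simp
  moreover have "(derived G ^^ Suc k) (carrier G) \<subseteq> derived G (K (L.th (n - k)))"
    using mono_derived[OF Suc.IH] Suc by simp
  ultimately show ?case by blast
qed

lemma G_solvable: assumes "core_free G H" "nilpotent_right_loop S mS \<one>"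
  shows "\<exists>n. (derived G ^^ n) (carrier G) = {\<one>}"
proof -
  obtain n where n: "L.th n = S \<times> S" using L.nilp_th[OF assms(2)] by blast
  have "(derived G ^^ n) (carrier G) \<subseteq> {\<one>}" using derived_chain[OF n, of n] K_zero[OF assms(1)] by simp
  moreover have "\<one> \<in> (derived G ^^ n) (carrier G)"
    using subgroup.one_closed[OF exp_of_derived_is_subgroup[OF subgroup_self]] by simp
  ultimately show ?thesis by blast
qed

end



theorem mainTheorem16:
  fixes G :: "('a, 'b) monoid_scheme" and H S :: "'a set"
  assumes "group G"
    and "subgroup H G"
    and "core_free G H"
    and "right_transversal G H S"
    and "generate G S = carrier G"
    and "nilpotent_right_loop S (transversal_op G H S) \<one>\<^bsub>G\<^esub>"
  shows "solvable (G\<lparr>carrier := H\<rparr>)"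
proof -
  interpret T: transv G H S using assms unfolding transv_def transv_axioms_def by blast
  obtain n where n: "(derived G ^^ n) (carrier G) = {\<one>\<^bsub>G\<^esub>}" using T.G_solvable assms(3,6) by blast
  have grp: "group (G\<lparr>carrier := H\<rparr>)" using subgroup.subgroup_is_group[OF assms(2,1)] .
  have subH: "(derived G ^^ k) H \<subseteq> H" for k
  proof (induction k)
    case 0 then show ?case by simp
  next
    case (Suc k) then show ?case using T.derived_incl[OF _ assms(2)] by simp
  qed
  have eq: "(derived (G\<lparr>carrier := H\<rparr>) ^^ k) H = (derived G ^^ k) H" for k
  proof (induction k)
    case 0 then show ?case by simp
  next
    case (Suc k) then show ?case using T.derived_consistent[OF subH assms(2)] by simp
  qed
  have "(derived G ^^ n) H \<subseteq> {\<one>\<^bsub>G\<^esub>}"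
    using T.mono_exp_of_derived[of H "carrier G" n] subgroup.subset[OF assms(2)] n by simp
  moreover have "\<one>\<^bsub>G\<^esub> \<in> (derived G ^^ n) H"
    using subgroup.one_closed[OF T.exp_of_derived_is_subgroup[OF assms(2)]] by simp
  ultimately have "(derived (G\<lparr>carrier := H\<rparr>) ^^ n) (carrier (G\<lparr>carrier := H\<rparr>)) = {\<one>\<^bsub>G\<lparr>carrier := H\<rparr>\<^esub>}"
    using eq by auto
  then show ?thesis using group.solvable_iff_trivial_derived_seq[OF grp] by blast
qed



end
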